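(* Let $k$ be a positive definite kernel on $\mathcal{Z}$ with $k(z,z)\le1$ and RKHS $\mathcal{H}_k$, let $f\in\mathcal{H}_k$, and let $\lambda>0$. Let $\mu^{t,f}(\cdot)=k_{Z^t}(\cdot)^\top(K_{Z^t}+\lambda^2I)^{-1}Y_{Z^t}$ be the kernel ridge predictor computed from $t$ noisy observations $Y(z^i)=f(z^i)+\varepsilon^i$, $i=1,\dots,t$, at points $Z^t=\{z^i\}_{i=1}^t$, where the noise terms are zero-mean and $\sigma$-sub-Gaussian. Then for $\delta>0$, with probability at least $1-\delta$, $$\|\mu^{t,f}\|_{\mathcal{H}_k}\le\|f\|_{\mathcal{H}_k}+\frac{\sigma}{\lambda}\sqrt{2\left(\Gamma_{k,\lambda}(t)+1+\log\frac1\delta\right)}.$$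
   Context: $k_{Z^t}(z)=[k(z,z^i)]_{i=1}^t$, $K_{Z^t}=[k(z^i,z^j)]_{i,j=1}^t$, $Y_{Z^t}=[Y(z^i)]_{i=1}^t$. The maximum information gain is $\Gamma_{k,\lambda}(t)=\max_{Z\subset\mathcal{Z},|Z|=t}\frac12\log\det(I+\lambda^{-2}K_Z)$.
   Formalization: The noise terms $\varepsilon^i$ are also mutually independent, and $\Gamma_{k,\lambda}(t)$ is the supremum over t-tuples of points, repetitions allowed, rather than the maximum over sets Z with |Z|=t. Apart from conventions, each condition added here is assumed in the paper as well or is needed for the statement above to hold. *)

theory Defs
  imports "HOL-Analysis.Analysis" "HOL-Probability.Probability"
begin

definition pd_kernel :: "('z \<Rightarrow> 'z \<Rightarrow> real) \<Rightarrow> bool" where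
  "pd_kernel k \<longleftrightarrow> (\<forall>x y. k x y = k y x) \<and>
     (\<forall>(n::nat) (xs::nat \<Rightarrow> 'z) (c::nat \<Rightarrow> real).
        0 \<le> (\<Sum>i<n. \<Sum>j<n. c i * c j * k (xs i) (xs j)))"

text \<open>RKHS membership and norm (Aronszajn): f is in H_k iff there is C with
  (sum_i c_i f(x_i))^2 <= C * sum_ij c_i c_j k(x_i,x_j) for all finite families;
  the squared RKHS norm is the least such C.\<close>
definition rkhs_bound :: "('z \<Rightarrow> 'z \<Rightarrow> real) \<Rightarrow> ('z \<Rightarrow> real) \<Rightarrow> real \<Rightarrow> bool" where
  "rkhs_bound k f C \<longleftrightarrow> (\<forall>(n::nat) (xs::nat \<Rightarrow> 'z) (c::nat \<Rightarrow> real).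
      (\<Sum>i<n. c i * f (xs i))\<^sup>2 \<le> C * (\<Sum>i<n. \<Sum>j<n. c i * c j * k (xs i) (xs j)))"

definition in_rkhs :: "('z \<Rightarrow> 'z \<Rightarrow> real) \<Rightarrow> ('z \<Rightarrow> real) \<Rightarrow> bool" where
  "in_rkhs k f \<longleftrightarrow> (\<exists>C. rkhs_bound k f C)"

definition rkhs_norm :: "('z \<Rightarrow> 'z \<Rightarrow> real) \<Rightarrow> ('z \<Rightarrow> real) \<Rightarrow> real" where
  "rkhs_norm k f = sqrt (Inf {C. 0 \<le> C \<and> rkhs_bound k f C})"

text \<open>Gram matrix of points indexed by a finite type 'n (t = CARD('n)).\<close>
definition gram :: "('z \<Rightarrow> 'z \<Rightarrow> real) \<Rightarrow> ('n::finite \<Rightarrow> 'z) \<Rightarrow> real^'n^'n" where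
  "gram k zs = (\<chi> i j. k (zs i) (zs j))"

text \<open>Maximum information gain Gamma_{k,lambda}(t) with t = CARD('n): supremum over all
  t-tuples of points (repetitions allowed) of 1/2 log det(I + lambda^-2 K).\<close>
definition max_info_gain :: "('z \<Rightarrow> 'z \<Rightarrow> real) \<Rightarrow> real \<Rightarrow> 'n::finite itself \<Rightarrow> real" where
  "max_info_gain k lam (t::'n itself) =
     (SUP zs \<in> (UNIV :: ('n \<Rightarrow> 'z) set).
        ln (det (mat 1 + (1 / lam\<^sup>2) *\<^sub>R gram k zs)) / 2)"

definition krr_pred :: "('z \<Rightarrow> 'z \<Rightarrow> real) \<Rightarrow> real \<Rightarrow> ('n::finite \<Rightarrow> 'z) \<Rightarrow> real^'n \<Rightarrow> 'z \<Rightarrow> real" where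
  "krr_pred k lam zs Y x =
     (\<Sum>i\<in>UNIV. k x (zs i) * (matrix_inv (gram k zs + lam\<^sup>2 *\<^sub>R mat 1) *v Y) $ i)"

definition (in prob_space) subgaussian :: "real \<Rightarrow> ('a \<Rightarrow> real) \<Rightarrow> bool" where
  "subgaussian \<sigma> X \<longleftrightarrow> random_variable borel X \<and> integrable M X \<and> expectation X = 0 \<and>
     (\<forall>s::real. integrable M (\<lambda>\<omega>. exp (s * X \<omega>)) \<and>
        expectation (\<lambda>\<omega>. exp (s * X \<omega>)) \<le> exp (s\<^sup>2 * \<sigma>\<^sup>2 / 2))"

end

theory Submission
  imports Defs
begin


lemma sym_dot:
  fixes Q :: "real^'n^'n"
  assumes sym: "\<forall>i j. Q$i$j = Q$j$i"
  shows "(Q *v x) \<bullet> y = x \<bullet> (Q *v y)"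
proof -
  have "(Q *v x) \<bullet> y = (\<Sum>i\<in>UNIV. \<Sum>j\<in>UNIV. Q$i$j * x$j * y$i)"
    by (simp add: matrix_vector_mult_def inner_vec_def sum_distrib_right)
  also have "\<dots> = (\<Sum>j\<in>UNIV. \<Sum>i\<in>UNIV. Q$i$j * x$j * y$i)"
    by (rule sum.swap)
  also have "\<dots> = x \<bullet> (Q *v y)"
    by (simp add: matrix_vector_mult_def inner_vec_def sum_distrib_left sym mult_ac)
  finally show ?thesis .
qed

lemma quad_nonpos_zero:
  fixes b c :: real
  assumes "\<And>s. 2 * s * b + s\<^sup>2 * c \<le> 0"
  shows "b = 0"
proof -
  define d where "d = \<bar>c\<bar> + 1"
  have pos: "d > 0" by (simp add: d_def)
  have "2 * (b/d) * b + (b/d)\<^sup>2 * c \<le> 0" by (rule assms)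
  moreover have "2 * (b/d) * b + (b/d)\<^sup>2 * c = b\<^sup>2 * (2 * d + c) / d\<^sup>2"
    using pos by (simp add: field_simps power2_eq_square)
  ultimately have "b\<^sup>2 * (2 * d + c) / d\<^sup>2 \<le> 0" by simp
  hence "b\<^sup>2 * (2 * d + c) \<le> 0"
    using pos by (simp add: divide_le_0_iff)
  moreover have "2 * d + c > 0" by (simp add: d_def abs_if)
  ultimately have "b\<^sup>2 \<le> 0" by (simp add: mult_le_0_iff)
  thus ?thesis by simp
qed


lemma spectral_aux:
  fixes Q :: "real^'n^'n"
  assumes sym: "\<forall>i j. Q$i$j = Q$j$i"
  shows "subspace S \<Longrightarrow> (\<forall>x\<in>S. Q *v x \<in> S) \<Longrightarrow>
    \<exists>B. B \<subseteq> S \<and> span B = S \<and> (\<forall>x\<in>B. norm x = 1 \<and> (\<exists>\<mu>. Q *v x = \<mu> *\<^sub>R x)) \<and> pairwise orthogonal B"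
proof (induction "dim S" arbitrary: S rule: less_induct)
  case less
  show ?case
  proof (cases "S = {0}")
    case True
    then show ?thesis by (intro exI[of _ "{}"]) auto
  next
    case False
    have "0 \<in> S" using less.prems(1) by (simp add: subspace_0)
    with False obtain s where s: "s \<in> S" "s \<noteq> 0" by auto
    define T where "T = sphere 0 1 \<inter> S"
    have cT: "compact T" unfolding T_def
      using less.prems(1) by (intro compact_Int_closed compact_sphere closed_subspace) auto
    have "s /\<^sub>R norm s \<in> T" unfolding T_def using s less.prems(1)
      by (auto simp: subspace_scale)
    hence neT: "T \<noteq> {}" by auto
    have cont: "continuous_on T (\<lambda>x. x \<bullet> (Q *v x))"
      by (intro continuous_intros)
    obtain x where xT: "x \<in> T" and xmax: "\<And>y. y \<in> T \<Longrightarrow> y \<bullet> (Q *v y) \<le> x \<bullet> (Q *v x)"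
      using continuous_attains_sup[OF cT neT cont] by blast
    define \<mu> where "\<mu> = x \<bullet> (Q *v x)"
    have xS: "x \<in> S" and xn: "norm x = 1" using xT by (auto simp: T_def)
    have xx: "x \<bullet> x = 1" using xn by (simp add: norm_eq_1)
    have gen: "z \<bullet> (Q *v z) \<le> \<mu> * (z \<bullet> z)" if "z \<in> S" for z
    proof (cases "z = 0")
      case True then show ?thesis by simp
    next
      case False
      have "z /\<^sub>R norm z \<in> T" unfolding T_def using that less.prems(1) False
        by (auto simp: subspace_scale)
      hence "(z /\<^sub>R norm z) \<bullet> (Q *v (z /\<^sub>R norm z)) \<le> \<mu>" using xmax \<mu>_def by blast
      hence "(z \<bullet> (Q *v z)) / (norm z)\<^sup>2 \<le> \<mu>"
        by (simp add: matrix_vector_mult_scaleR power2_eq_square divide_inverse mult_ac)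
      moreover have "(norm z)\<^sup>2 > 0" using False by simp
      ultimately have "z \<bullet> (Q *v z) \<le> \<mu> * (norm z)\<^sup>2" by (simp add: divide_le_eq)
      thus ?thesis by (simp add: power2_norm_eq_inner)
    qed
    have claim1: "y \<bullet> (Q *v x) = 0" if yS: "y \<in> S" and yx: "y \<bullet> x = 0" for y
    proof (rule quad_nonpos_zero[where c = "y \<bullet> (Q *v y) - \<mu> * (y \<bullet> y)"])
      fix t :: real
      have "x + t *\<^sub>R y \<in> S" using xS yS less.prems(1) by (simp add: subspace_add subspace_scale)
      from gen[OF this] have le: "(x + t *\<^sub>R y) \<bullet> (Q *v (x + t *\<^sub>R y)) \<le> \<mu> * ((x + t *\<^sub>R y) \<bullet> (x + t *\<^sub>R y))" .
      have e1: "(x + t *\<^sub>R y) \<bullet> (Q *v (x + t *\<^sub>R y)) = \<mu> + 2 * t * (y \<bullet> (Q *v x)) + t\<^sup>2 * (y \<bullet> (Q *v y))"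
      proof -
        have "x \<bullet> (Q *v y) = y \<bullet> (Q *v x)" using sym_dot[OF sym, of y x] by (simp add: inner_commute)
        thus ?thesis
          by (simp add: matrix_vector_right_distrib matrix_vector_mult_scaleR inner_add_left inner_add_right
              \<mu>_def power2_eq_square algebra_simps)
      qed
      have e2: "(x + t *\<^sub>R y) \<bullet> (x + t *\<^sub>R y) = 1 + t\<^sup>2 * (y \<bullet> y)"
        using xx yx by (simp add: inner_add_left inner_add_right inner_commute power2_eq_square algebra_simps)
      from le have "\<mu> + 2 * t * (y \<bullet> (Q *v x)) + t\<^sup>2 * (y \<bullet> (Q *v y)) \<le> \<mu> * (1 + t\<^sup>2 * (y \<bullet> y))"
        by (simp only: e1 e2)
      thus "2 * t * (y \<bullet> (Q *v x)) + t\<^sup>2 * (y \<bullet> (Q *v y) - \<mu> * (y \<bullet> y)) \<le> 0"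
        by (simp add: algebra_simps)
    qed
    have eig: "Q *v x = \<mu> *\<^sub>R x"
    proof -
      define y where "y = Q *v x - \<mu> *\<^sub>R x"
      have yS: "y \<in> S" unfolding y_def using less.prems xS by (simp add: subspace_diff subspace_scale)
      have yx: "y \<bullet> x = 0" unfolding y_def using xx by (simp add: inner_diff_left inner_diff_right \<mu>_def inner_commute)
      have "y \<bullet> y = y \<bullet> (Q *v x) - \<mu> * (y \<bullet> x)" unfolding y_def
        by (simp add: inner_diff_right)
      also have "\<dots> = 0" using claim1[OF yS yx] yx by simp
      finally have "y = 0" by simp
      thus ?thesis unfolding y_def by simp
    qed
    define S' where "S' = S \<inter> {y. x \<bullet> y = 0}"
    have subS': "subspace S'" unfolding S'_def
      using less.prems(1) by (intro subspace_inter) (auto simp: subspace_def inner_add_right)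
    have invS': "\<forall>y\<in>S'. Q *v y \<in> S'"
    proof
      fix y assume "y \<in> S'"
      hence yS: "y \<in> S" and xy: "x \<bullet> y = 0" by (auto simp: S'_def)
      have "x \<bullet> (Q *v y) = (Q *v x) \<bullet> y" using sym_dot[OF sym, of x y] by simp
      also have "\<dots> = 0" using eig xy by simp
      finally show "Q *v y \<in> S'" using less.prems(2) yS by (auto simp: S'_def)
    qed
    have xnS': "x \<notin> S'" using xx by (simp add: S'_def)
    have "S' \<subset> S"
    proof (rule psubsetI)
      show "S' \<subseteq> S" by (auto simp: S'_def)
      show "S' \<noteq> S" using xS xnS' by blast
    qed
    hence "dim S' < dim S"
      using subS' less.prems(1) by (intro dim_psubset) (simp add: span_eq_iff[THEN iffD2])
    from less.hyps[OF this subS' invS'] obtain B where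
      B: "B \<subseteq> S'" "span B = S'" "\<forall>x\<in>B. norm x = 1 \<and> (\<exists>\<mu>. Q *v x = \<mu> *\<^sub>R x)" "pairwise orthogonal B"
      by blast
    show ?thesis
    proof (intro exI[of _ "insert x B"] conjI)
      show "insert x B \<subseteq> S" using B(1) xS by (auto simp: S'_def)
      show "span (insert x B) = S"
      proof
        show "span (insert x B) \<subseteq> S" using \<open>insert x B \<subseteq> S\<close> less.prems(1)
          by (simp add: span_minimal)
        show "S \<subseteq> span (insert x B)"
        proof
          fix z assume zS: "z \<in> S"
          have "z - (x \<bullet> z) *\<^sub>R x \<in> S'" unfolding S'_def using zS xS xx less.prems(1)
            by (auto simp: subspace_diff subspace_scale inner_diff_right)
          hence "z - (x \<bullet> z) *\<^sub>R x \<in> span (insert x B)" using B(2) span_mono[of B "insert x B"] by auto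
          moreover have "(x \<bullet> z) *\<^sub>R x \<in> span (insert x B)" by (simp add: span_base span_scale)
          ultimately have "(z - (x \<bullet> z) *\<^sub>R x) + (x \<bullet> z) *\<^sub>R x \<in> span (insert x B)" by (rule span_add)
          thus "z \<in> span (insert x B)" by simp
        qed
      qed
      show "\<forall>y\<in>insert x B. norm y = 1 \<and> (\<exists>\<mu>. Q *v y = \<mu> *\<^sub>R y)" using B(3) xn eig by auto
      show "pairwise orthogonal (insert x B)"
        using B(1,4) unfolding pairwise_insert by (auto simp: S'_def orthogonal_def inner_commute)
    qed
  qed
qed


lemma spectral:
  fixes Q :: "real^'n^'n"
  assumes sym: "\<forall>i j. Q$i$j = Q$j$i"
  obtains u :: "'n \<Rightarrow> real^'n" and \<kappa> :: "'n \<Rightarrow> real"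
  where "\<And>i j. u i \<bullet> u j = (if i = j then 1 else 0)" "\<And>j. Q *v u j = \<kappa> j *\<^sub>R u j"
    "\<And>x. x = (\<Sum>j\<in>UNIV. (u j \<bullet> x) *\<^sub>R u j)"
proof -
  obtain B where B: "span B = UNIV" "\<forall>x\<in>B. norm x = 1 \<and> (\<exists>\<mu>. Q *v x = \<mu> *\<^sub>R x)" "pairwise orthogonal B"
    using spectral_aux[OF sym, of UNIV] by auto
  have "0 \<notin> B" using B(2) by force
  hence ind: "independent B" using B(3) by (rule pairwise_orthogonal_independent[rotated])
  hence finB: "finite B" using independent_bound by blast
  have "card B = dim (UNIV :: (real^'n) set)" using ind B(1) by (intro basis_card_eq_dim) auto
  hence "card B = CARD('n)" by simp
  then obtain h where h: "bij_betw h (UNIV::'n set) B"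
    using finite_same_card_bij[of "UNIV::'n set" B] finB by auto
  have orth: "h i \<bullet> h j = (if i = j then 1 else 0)" for i j
  proof (cases "i = j")
    case True
    have "norm (h i) = 1" using B(2) h by (auto simp: bij_betw_def)
    thus ?thesis using True by (simp add: norm_eq_1)
  next
    case False
    hence "h i \<noteq> h j" using h by (auto simp: bij_betw_def inj_on_def)
    moreover have "h i \<in> B" "h j \<in> B" using h by (auto simp: bij_betw_def)
    ultimately show ?thesis using B(3) False by (auto simp: pairwise_def orthogonal_def)
  qed
  have "\<forall>j. \<exists>\<mu>. Q *v h j = \<mu> *\<^sub>R h j" using B(2) h by (auto simp: bij_betw_def)
  then obtain \<kappa> where \<kappa>: "\<And>j. Q *v h j = \<kappa> j *\<^sub>R h j" by metis
  have exp: "x = (\<Sum>j\<in>UNIV. (h j \<bullet> x) *\<^sub>R h j)" for x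
  proof -
    define v where "v = x - (\<Sum>j\<in>UNIV. (h j \<bullet> x) *\<^sub>R h j)"
    have vj: "h j \<bullet> v = 0" for j
    proof -
      have "h j \<bullet> (\<Sum>i\<in>UNIV. (h i \<bullet> x) *\<^sub>R h i) = (\<Sum>i\<in>UNIV. (h i \<bullet> x) * (h j \<bullet> h i))"
        by (simp add: inner_sum_right)
      also have "\<dots> = h j \<bullet> x" by (simp add: orth if_distrib cong: if_cong)
      finally show ?thesis by (simp add: v_def inner_diff_right)
    qed
    have "orthogonal v v"
    proof (rule orthogonal_to_span)
      show "v \<in> span B" using B(1) by simp
      fix y assume "y \<in> B"
      then obtain j where "y = h j" using h by (auto simp: bij_betw_def)
      thus "orthogonal v y" using vj by (simp add: orthogonal_def inner_commute)
    qed
    hence "v = 0" by (simp add: orthogonal_def)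
    thus ?thesis by (simp add: v_def)
  qed
  show ?thesis using that[OF orth \<kappa> exp] .
qed


definition eigbasis :: "real^'n^'n \<Rightarrow> ('n \<Rightarrow> real^'n) \<Rightarrow> ('n \<Rightarrow> real) \<Rightarrow> bool" where
  "eigbasis Q u \<kappa> \<longleftrightarrow> (\<forall>i j. u i \<bullet> u j = (if i = j then 1 else 0)) \<and> (\<forall>j. Q *v u j = \<kappa> j *\<^sub>R u j)
     \<and> (\<forall>x. x = (\<Sum>j\<in>UNIV. (u j \<bullet> x) *\<^sub>R u j))"

lemma eigbasis_ON: "eigbasis Q u \<kappa> \<Longrightarrow> u i \<bullet> u j = (if i = j then 1 else 0)"
  unfolding eigbasis_def by (drule conjunct1) (drule spec, drule spec, assumption)

lemma eigbasis_eig: "eigbasis Q u \<kappa> \<Longrightarrow> Q *v u j = \<kappa> j *\<^sub>R u j"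
  unfolding eigbasis_def by (drule conjunct2, drule conjunct1) (drule spec, assumption)

lemma eigbasis_exp: "eigbasis Q u \<kappa> \<Longrightarrow> x = (\<Sum>j\<in>UNIV. (u j \<bullet> x) *\<^sub>R u j)"
  unfolding eigbasis_def by (drule conjunct2, drule conjunct2) (drule spec, assumption)

lemma spectral_ex:
  fixes Q :: "real^'n^'n"
  assumes sym: "\<forall>i j. Q$i$j = Q$j$i"
  shows "\<exists>u \<kappa>. eigbasis Q u \<kappa>"
proof (rule spectral[OF sym])
  fix u :: "'n \<Rightarrow> real^'n" and \<kappa>
  assume a: "\<And>i j. u i \<bullet> u j = (if i = j then 1 else 0)" and b: "\<And>j. Q *v u j = \<kappa> j *\<^sub>R u j"
    and c: "\<And>x. x = (\<Sum>j\<in>UNIV. (u j \<bullet> x) *\<^sub>R u j)"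
  have "eigbasis Q u \<kappa>" unfolding eigbasis_def
  proof (intro conjI allI)
    fix i j show "u i \<bullet> u j = (if i = j then 1 else 0)" by (rule a)
  next
    fix j show "Q *v u j = \<kappa> j *\<^sub>R u j" by (rule b)
  next
    fix x :: "real^'n" show "x = (\<Sum>j\<in>UNIV. (u j \<bullet> x) *\<^sub>R u j)" by (rule c)
  qed
  thus "\<exists>u \<kappa>. eigbasis Q u \<kappa>" by (intro exI)
qed



lemma on_sum_inner:
  fixes u :: "'n::finite \<Rightarrow> real^'n"
  assumes ON: "\<And>i j. u i \<bullet> u j = (if i = j then 1 else 0)"
  shows "(\<Sum>j\<in>UNIV. c j *\<^sub>R u j) \<bullet> (\<Sum>j\<in>UNIV. d j *\<^sub>R u j) = (\<Sum>j\<in>UNIV. c j * d j)"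
  by (simp add: inner_sum_left inner_sum_right ON if_distrib mult.commute cong: if_cong)

lemma on_inner:
  fixes u :: "'n::finite \<Rightarrow> real^'n"
  assumes ON: "\<And>i j. u i \<bullet> u j = (if i = j then 1 else 0)"
    and exp: "\<And>x. x = (\<Sum>j\<in>UNIV. (u j \<bullet> x) *\<^sub>R u j)"
  shows "x \<bullet> y = (\<Sum>j\<in>UNIV. (u j \<bullet> x) * (u j \<bullet> y))"
proof -
  have "x \<bullet> y = (\<Sum>j\<in>UNIV. (u j \<bullet> x) *\<^sub>R u j) \<bullet> (\<Sum>j\<in>UNIV. (u j \<bullet> y) *\<^sub>R u j)"
    using exp[of x] exp[of y] by simp
  also have "\<dots> = (\<Sum>j\<in>UNIV. (u j \<bullet> x) * (u j \<bullet> y))" by (rule on_sum_inner[OF ON])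
  finally show ?thesis .
qed

lemma on_quad:
  fixes u :: "'n::finite \<Rightarrow> real^'n" and Q :: "real^'n^'n"
  assumes sym: "\<forall>i j. Q$i$j = Q$j$i"
    and ON: "\<And>i j. u i \<bullet> u j = (if i = j then 1 else 0)"
    and exp: "\<And>x. x = (\<Sum>j\<in>UNIV. (u j \<bullet> x) *\<^sub>R u j)"
    and eig: "\<And>j. Q *v u j = \<kappa> j *\<^sub>R u j"
  shows "x \<bullet> (Q *v y) = (\<Sum>j\<in>UNIV. \<kappa> j * (u j \<bullet> x) * (u j \<bullet> y))"
proof -
  have "u j \<bullet> (Q *v y) = \<kappa> j * (u j \<bullet> y)" for j
    using sym_dot[OF sym, of "u j" y] eig[of j] by simp
  thus ?thesis using on_inner[OF ON exp, of x "Q *v y"] by (simp add: mult_ac)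
qed

lemma det_eig:
  fixes M :: "real^'n^'n" and u :: "'n \<Rightarrow> real^'n"
  assumes ON: "\<And>i j. u i \<bullet> u j = (if i = j then 1 else 0)"
    and eig: "\<And>j. M *v u j = d j *\<^sub>R u j"
  shows "det M = (\<Prod>j\<in>UNIV. d j)"
proof -
  define U :: "real^'n^'n" where "U = (\<chi> i j. u j $ i)"
  define D :: "real^'n^'n" where "D = (\<chi> i j. if i = j then d j else 0)"
  have UU: "transpose U ** U = mat 1"
    unfolding vec_eq_iff
    by (auto simp: matrix_matrix_mult_def transpose_def mat_def U_def ON[symmetric] inner_vec_def mult.commute)
  have MU: "M ** U = U ** D"
  proof -
    have "(M ** U)$i$j = (U ** D)$i$j" for i j
    proof -
      have "(M ** U)$i$j = (M *v u j)$i"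
        by (simp add: matrix_matrix_mult_def matrix_vector_mult_def U_def)
      also have "\<dots> = d j * u j $ i" by (simp add: eig)
      also have "\<dots> = (U ** D)$i$j"
        by (simp add: matrix_matrix_mult_def D_def U_def if_distrib cong: if_cong)
      finally show ?thesis .
    qed
    thus ?thesis by (simp add: vec_eq_iff)
  qed
  have "det U * det U = 1" using arg_cong[OF UU, of det] by (simp add: det_mul)
  hence nz: "det U \<noteq> 0" by auto
  have "det M * det U = det U * det D" using arg_cong[OF MU, of det] by (simp add: det_mul)
  hence "det M = det D" using nz by simp
  also have "det D = (\<Prod>j\<in>UNIV. d j)" by (subst det_diagonal) (auto simp: D_def)
  finally show ?thesis .
qed



lemma pd_fin:
  assumes pd: "pd_kernel k" and fin: "finite I"
  shows "0 \<le> (\<Sum>i\<in>I. \<Sum>j\<in>I. c i * c j * k (x i) (x j))"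
proof -
  obtain h where h: "bij_betw h {0..<card I} I" using ex_bij_betw_nat_finite[OF fin] by blast
  have re: "sum G I = (\<Sum>i\<in>{0..<card I}. G (h i))" for G :: "_ \<Rightarrow> real"
    by (rule sum.reindex_bij_betw[OF h, symmetric])
  have "(\<Sum>i\<in>I. \<Sum>j\<in>I. c i * c j * k (x i) (x j))
      = (\<Sum>i\<in>{0..<card I}. \<Sum>j\<in>{0..<card I}. c (h i) * c (h j) * k (x (h i)) (x (h j)))"
    by (simp only: re)
  also have "\<dots> \<ge> 0" using pd unfolding pd_kernel_def atLeast0LessThan
    by (auto elim!: allE[of _ "card I"] allE[of _ "x \<circ> h"] allE[of _ "c \<circ> h"])
  finally show ?thesis .
qed

lemma discr:
  fixes a b c :: real
  assumes "\<And>s. 0 \<le> a + 2 * s * b + s\<^sup>2 * c" "0 \<le> a" "0 \<le> c"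
  shows "b\<^sup>2 \<le> a * c"
proof (cases "c = 0")
  case True
  have "b = 0"
  proof (rule ccontr)
    assume "b \<noteq> 0"
    have "0 \<le> a + 2 * (- (a + 1) / (2 * b)) * b + (- (a + 1) / (2 * b))\<^sup>2 * c" by (rule assms(1))
    also have "\<dots> = -1" using True \<open>b \<noteq> 0\<close> by (simp add: field_simps)
    finally show False by simp
  qed
  thus ?thesis using True by simp
next
  case False
  hence cp: "c > 0" using assms(3) by simp
  have "0 \<le> a + 2 * (- b / c) * b + (- b / c)\<^sup>2 * c" by (rule assms(1))
  also have "\<dots> = (a * c - b\<^sup>2) / c" using cp by (simp add: field_simps power2_eq_square)
  finally show ?thesis using cp by (simp add: zero_le_divide_iff)
qed

lemma cs_fin:
  assumes pd: "pd_kernel k" and fin: "finite I"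
  shows "(\<Sum>i\<in>I. \<Sum>j\<in>I. c i * d j * k (x i) (x j))\<^sup>2
    \<le> (\<Sum>i\<in>I. \<Sum>j\<in>I. c i * c j * k (x i) (x j)) * (\<Sum>i\<in>I. \<Sum>j\<in>I. d i * d j * k (x i) (x j))"
proof (rule discr)
  have symk: "k a b = k b a" for a b using pd by (simp add: pd_kernel_def)
  fix s :: real
  have "0 \<le> (\<Sum>i\<in>I. \<Sum>j\<in>I. (c i + s * d i) * (c j + s * d j) * k (x i) (x j))"
    by (rule pd_fin[OF pd fin])
  also have "\<dots> = (\<Sum>i\<in>I. \<Sum>j\<in>I. c i * c j * k (x i) (x j))
      + s * (\<Sum>i\<in>I. \<Sum>j\<in>I. c i * d j * k (x i) (x j))
      + s * (\<Sum>i\<in>I. \<Sum>j\<in>I. d i * c j * k (x i) (x j))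
      + s\<^sup>2 * (\<Sum>i\<in>I. \<Sum>j\<in>I. d i * d j * k (x i) (x j))"
    by (simp add: sum.distrib sum_distrib_left algebra_simps power2_eq_square)
  also have "(\<Sum>i\<in>I. \<Sum>j\<in>I. d i * c j * k (x i) (x j)) = (\<Sum>i\<in>I. \<Sum>j\<in>I. c i * d j * k (x i) (x j))"
    by (subst sum.swap) (simp add: symk mult_ac)
  finally show "0 \<le> (\<Sum>i\<in>I. \<Sum>j\<in>I. c i * c j * k (x i) (x j))
      + 2 * s * (\<Sum>i\<in>I. \<Sum>j\<in>I. c i * d j * k (x i) (x j))
      + s\<^sup>2 * (\<Sum>i\<in>I. \<Sum>j\<in>I. d i * d j * k (x i) (x j))" by (simp add: algebra_simps)
qed (auto intro: pd_fin[OF pd fin])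

lemma kernel_bound:
  assumes pd: "pd_kernel k" and diag: "\<And>z. k z z \<le> 1"
  shows "\<bar>k a b\<bar> \<le> 1"
proof -
  define X where "X = (\<lambda>t::bool. if t then a else b)"
  define c where "c = (\<lambda>t::bool. if t then 1 else (0::real))"
  define d where "d = (\<lambda>t::bool. if t then 0 else (1::real))"
  have "(\<Sum>i\<in>UNIV. \<Sum>j\<in>UNIV. c i * d j * k (X i) (X j))\<^sup>2
    \<le> (\<Sum>i\<in>UNIV. \<Sum>j\<in>UNIV. c i * c j * k (X i) (X j)) * (\<Sum>i\<in>UNIV. \<Sum>j\<in>UNIV. d i * d j * k (X i) (X j))"
    by (rule cs_fin[OF pd]) simp
  hence le: "(k a b)\<^sup>2 \<le> k a a * k b b" by (simp add: UNIV_bool X_def c_def d_def)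
  have nn: "0 \<le> k z z" for z
    using pd_fin[OF pd, of "{()}" "\<lambda>_. 1" "\<lambda>_. z"] by simp
  have "k a a * k b b \<le> 1 * 1" using nn diag by (intro mult_mono) auto
  with le have "(k a b)\<^sup>2 \<le> 1\<^sup>2" by simp
  thus ?thesis using abs_le_square_iff[of "k a b" 1] by simp
qed

lemma rkhs_norm_le:
  assumes "rkhs_bound k g C" "0 \<le> C"
  shows "rkhs_norm k g \<le> sqrt C"
proof -
  have "Inf {C. 0 \<le> C \<and> rkhs_bound k g C} \<le> C"
    using assms by (intro cInf_lower) (auto intro: bdd_belowI[of _ 0])
  thus ?thesis unfolding rkhs_norm_def by simp
qed

lemma rkhs_bound_norm:
  fixes k :: "'z \<Rightarrow> 'z \<Rightarrow> real"
  assumes pd: "pd_kernel k" and f: "in_rkhs k f"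
  shows "rkhs_bound k f ((rkhs_norm k f)\<^sup>2) \<and> 0 \<le> rkhs_norm k f"
proof -
  define S where "S = {C. 0 \<le> C \<and> rkhs_bound k f C}"
  obtain C where C: "rkhs_bound k f C" using f by (auto simp: in_rkhs_def)
  have qnn: "0 \<le> (\<Sum>i<n. \<Sum>j<n. c i * c j * k (xs i) (xs j))" for n :: nat and xs c
    by (rule pd_fin[OF pd finite_lessThan])
  have "max C 0 \<in> S" unfolding S_def rkhs_bound_def
  proof (intro CollectI conjI allI)
    fix n :: nat and xs :: "nat \<Rightarrow> 'z" and c :: "nat \<Rightarrow> real"
    have "(\<Sum>i<n. c i * f (xs i))\<^sup>2 \<le> C * (\<Sum>i<n. \<Sum>j<n. c i * c j * k (xs i) (xs j))"
      using C by (simp add: rkhs_bound_def)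
    also have "\<dots> \<le> max C 0 * (\<Sum>i<n. \<Sum>j<n. c i * c j * k (xs i) (xs j))"
      by (intro mult_right_mono qnn) simp
    finally show "(\<Sum>i<n. c i * f (xs i))\<^sup>2 \<le> max C 0 * (\<Sum>i<n. \<Sum>j<n. c i * c j * k (xs i) (xs j))" .
  qed simp
  hence neS: "S \<noteq> {}" by auto
  have Inn: "0 \<le> Inf S" using neS by (intro cInf_greatest) (auto simp: S_def)
  have bdd: "bdd_below S" by (auto simp: S_def intro: bdd_belowI[of _ 0])
  have "rkhs_bound k f (Inf S)" unfolding rkhs_bound_def
  proof (intro allI)
    fix n :: nat and xs :: "nat \<Rightarrow> 'z" and c :: "nat \<Rightarrow> real"
    define a where "a = (\<Sum>i<n. c i * f (xs i))\<^sup>2"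
    define q where "q = (\<Sum>i<n. \<Sum>j<n. c i * c j * k (xs i) (xs j))"
    have aC: "a \<le> C' * q" if "C' \<in> S" for C' using that by (auto simp: S_def rkhs_bound_def a_def q_def)
    have "a \<le> Inf S * q"
    proof (cases "q = 0")
      case True
      obtain C' where "C' \<in> S" using neS by blast
      thus ?thesis using aC True by fastforce
    next
      case False
      moreover have "q \<ge> 0" unfolding q_def by (rule qnn)
      ultimately have qp: "q > 0" by simp
      have "a / q \<le> Inf S" using neS by (intro cInf_greatest) (auto simp: pos_divide_le_eq[OF qp] aC)
      thus ?thesis using qp by (simp add: pos_divide_le_eq)
    qed
    thus "(\<Sum>i<n. c i * f (xs i))\<^sup>2 \<le> Inf S * (\<Sum>i<n. \<Sum>j<n. c i * c j * k (xs i) (xs j))"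
      by (simp add: a_def q_def)
  qed
  moreover have "(rkhs_norm k f)\<^sup>2 = Inf S" unfolding rkhs_norm_def S_def[symmetric] using Inn by simp
  moreover have "0 \<le> rkhs_norm k f" unfolding rkhs_norm_def S_def[symmetric] using Inn by simp
  ultimately show ?thesis by simp
qed

lemma rkhs_bound_add:
  fixes k :: "'z \<Rightarrow> 'z \<Rightarrow> real"
  assumes pd: "pd_kernel k" and f: "rkhs_bound k f C" and g: "rkhs_bound k g D"
    and C: "0 \<le> C" and D: "0 \<le> D"
  shows "rkhs_bound k (\<lambda>x. f x + g x) ((sqrt C + sqrt D)\<^sup>2)"
  unfolding rkhs_bound_def
proof (intro allI)
  fix n :: nat and xs :: "nat \<Rightarrow> 'z" and c :: "nat \<Rightarrow> real"
  define a where "a = (\<Sum>i<n. c i * f (xs i))"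
  define b where "b = (\<Sum>i<n. c i * g (xs i))"
  define q where "q = (\<Sum>i<n. \<Sum>j<n. c i * c j * k (xs i) (xs j))"
  have q: "0 \<le> q" unfolding q_def by (rule pd_fin[OF pd finite_lessThan])
  have "a\<^sup>2 \<le> C * q" using f by (simp add: rkhs_bound_def a_def q_def)
  hence "sqrt (a\<^sup>2) \<le> sqrt (C * q)" by (rule real_sqrt_le_mono)
  hence ha: "\<bar>a\<bar> \<le> sqrt C * sqrt q" by (simp add: real_sqrt_mult)
  have "b\<^sup>2 \<le> D * q" using g by (simp add: rkhs_bound_def b_def q_def)
  hence "sqrt (b\<^sup>2) \<le> sqrt (D * q)" by (rule real_sqrt_le_mono)
  hence hb: "\<bar>b\<bar> \<le> sqrt D * sqrt q" by (simp add: real_sqrt_mult)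
  have "\<bar>a + b\<bar> \<le> (sqrt C + sqrt D) * sqrt q" using ha hb by (simp add: algebra_simps abs_triangle_ineq[THEN order_trans])
  hence "\<bar>a + b\<bar>\<^sup>2 \<le> ((sqrt C + sqrt D) * sqrt q)\<^sup>2" by (rule power_mono) simp
  hence "(a + b)\<^sup>2 \<le> (sqrt C + sqrt D)\<^sup>2 * q" using q by (simp add: power_mult_distrib)
  moreover have "(\<Sum>i<n. c i * (f (xs i) + g (xs i))) = a + b"
    by (simp add: a_def b_def algebra_simps sum.distrib)
  ultimately show "(\<Sum>i<n. c i * (f (xs i) + g (xs i)))\<^sup>2 \<le> (sqrt C + sqrt D)\<^sup>2 * (\<Sum>i<n. \<Sum>j<n. c i * c j * k (xs i) (xs j))"
    by (simp add: q_def)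
qed



lemma gram_quad:
  "x \<bullet> (gram k zs *v y) = (\<Sum>i\<in>UNIV. \<Sum>j\<in>UNIV. x$i * y$j * k (zs i) (zs j))"
  by (simp add: gram_def matrix_vector_mult_def inner_vec_def sum_distrib_left mult_ac)

lemma gram_psd:
  assumes pd: "pd_kernel k"
  shows "0 \<le> x \<bullet> (gram k zs *v x)"
  unfolding gram_quad by (rule pd_fin[OF pd]) simp

lemma gram_sym:
  assumes pd: "pd_kernel k"
  shows "\<forall>i j. gram k zs $i$j = gram k zs $j$i"
  using pd by (simp add: gram_def pd_kernel_def)

lemma rkhs_bound_comb:
  fixes k :: "'z \<Rightarrow> 'z \<Rightarrow> real" and zs :: "'n::finite \<Rightarrow> 'z" and \<alpha> :: "real^'n"
  assumes pd: "pd_kernel k"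
  shows "rkhs_bound k (\<lambda>x. \<Sum>i\<in>UNIV. k x (zs i) * \<alpha>$i) (\<alpha> \<bullet> (gram k zs *v \<alpha>))"
  unfolding rkhs_bound_def
proof (intro allI)
  fix n :: nat and xs :: "nat \<Rightarrow> 'z" and c :: "nat \<Rightarrow> real"
  define I where "I = {..<n} <+> (UNIV::'n set)"
  define X where "X = case_sum xs zs"
  define c' :: "nat + 'n \<Rightarrow> real" where "c' = case_sum c (\<lambda>_. 0::real)"
  define d' :: "nat + 'n \<Rightarrow> real" where "d' = case_sum (\<lambda>_. 0::real) (\<lambda>i. \<alpha>$i)"
  have fI: "finite I" by (simp add: I_def)
  have cs: "(\<Sum>i\<in>I. \<Sum>j\<in>I. c' i * d' j * k (X i) (X j))\<^sup>2
    \<le> (\<Sum>i\<in>I. \<Sum>j\<in>I. c' i * c' j * k (X i) (X j)) * (\<Sum>i\<in>I. \<Sum>j\<in>I. d' i * d' j * k (X i) (X j))"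
    by (rule cs_fin[OF pd fI])
  have e1: "(\<Sum>i\<in>I. \<Sum>j\<in>I. c' i * d' j * k (X i) (X j)) = (\<Sum>m<n. c m * (\<Sum>i\<in>UNIV. k (xs m) (zs i) * \<alpha>$i))"
    by (simp add: I_def sum.Plus X_def c'_def d'_def sum_distrib_left mult_ac)
  have e2: "(\<Sum>i\<in>I. \<Sum>j\<in>I. c' i * c' j * k (X i) (X j)) = (\<Sum>i<n. \<Sum>j<n. c i * c j * k (xs i) (xs j))"
    by (simp add: I_def sum.Plus X_def c'_def)
  have e3: "(\<Sum>i\<in>I. \<Sum>j\<in>I. d' i * d' j * k (X i) (X j)) = \<alpha> \<bullet> (gram k zs *v \<alpha>)"
    by (simp add: I_def sum.Plus X_def d'_def gram_quad)
  show "(\<Sum>m<n. c m * (\<Sum>i\<in>UNIV. k (xs m) (zs i) * \<alpha>$i))\<^sup>2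
    \<le> \<alpha> \<bullet> (gram k zs *v \<alpha>) * (\<Sum>i<n. \<Sum>j<n. c i * c j * k (xs i) (xs j))"
    using cs unfolding e1 e2 e3 by (simp add: mult.commute)
qed


lemma rkhs_bound_fin:
  fixes k :: "'z \<Rightarrow> 'z \<Rightarrow> real" and zs :: "'n::finite \<Rightarrow> 'z" and c :: "real^'n"
  assumes "rkhs_bound k f C"
  shows "(\<Sum>i\<in>UNIV. c$i * f (zs i))\<^sup>2 \<le> C * (c \<bullet> (gram k zs *v c))"
proof -
  obtain h where h: "bij_betw h {0..<CARD('n)} (UNIV::'n set)"
    using ex_bij_betw_nat_finite[of "UNIV::'n set"] by auto
  have re: "sum G (UNIV::'n set) = (\<Sum>i\<in>{0..<CARD('n)}. G (h i))" for G :: "'n \<Rightarrow> real"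
    by (rule sum.reindex_bij_betw[OF h, symmetric])
  have "(\<Sum>i<CARD('n). c$(h i) * f ((zs \<circ> h) i))\<^sup>2
     \<le> C * (\<Sum>i<CARD('n). \<Sum>j<CARD('n). c$(h i) * c$(h j) * k ((zs \<circ> h) i) ((zs \<circ> h) j))"
    using assms[unfolded rkhs_bound_def, rule_format, where n="CARD('n)" and c="\<lambda>i. c$(h i)" and xs="zs \<circ> h"] by simp
  thus ?thesis unfolding gram_quad by (simp only: re atLeast0LessThan comp_def)
qed

lemma scaleR_mat1_mult: "((c::real) *\<^sub>R mat 1) *v (x::real^'n) = c *\<^sub>R x"
  by (simp add: scaleR_matrix_vector_assoc[symmetric])

lemma G_inv:
  fixes k :: "'z \<Rightarrow> 'z \<Rightarrow> real" and zs :: "'n::finite \<Rightarrow> 'z"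
  assumes pd: "pd_kernel k" and lam: "lam > 0"
  shows "(gram k zs + lam\<^sup>2 *\<^sub>R mat 1) ** matrix_inv (gram k zs + lam\<^sup>2 *\<^sub>R mat 1) = mat 1"
proof -
  define G where "G = gram k zs + lam\<^sup>2 *\<^sub>R mat 1"
  have Gv: "G *v x = gram k zs *v x + lam\<^sup>2 *\<^sub>R x" for x
    by (simp add: G_def matrix_vector_mult_add_rdistrib scaleR_mat1_mult)
  have "\<forall>x. G *v x = 0 \<longrightarrow> x = 0"
  proof (intro allI impI)
    fix x assume "G *v x = 0"
    hence "x \<bullet> (G *v x) = 0" by simp
    hence "x \<bullet> (gram k zs *v x) + lam\<^sup>2 * (x \<bullet> x) = 0" by (simp add: Gv inner_add_right)
    moreover have "0 \<le> x \<bullet> (gram k zs *v x)" by (rule gram_psd[OF pd])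
    moreover have "lam\<^sup>2 > 0" using lam by simp
    ultimately have "x \<bullet> x \<le> 0"
      by (smt (verit) mult_pos_pos inner_ge_zero)
    hence "x \<bullet> x = 0" using inner_ge_zero[of x] by linarith
    thus "x = 0" by simp
  qed
  hence "\<exists>B. B ** G = mat 1" using matrix_left_invertible_ker by blast
  hence "invertible G" using invertible_left_inverse by blast
  hence "\<exists>A'. G ** A' = mat 1 \<and> A' ** G = mat 1" unfolding invertible_def .
  hence "G ** matrix_inv G = mat 1 \<and> matrix_inv G ** G = mat 1"
    unfolding matrix_inv_def by (rule someI_ex)
  thus ?thesis unfolding G_def by simp
qed


lemma aux_frac: "(c::real) > 0 \<Longrightarrow> \<kappa> / c * (c * b)\<^sup>2 / l = \<kappa> * c / l * b\<^sup>2"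
  by (simp add: power2_eq_square field_simps)

lemma det_bound:
  fixes k :: "'z \<Rightarrow> 'z \<Rightarrow> real" and zs :: "'n::finite \<Rightarrow> 'z" and E :: "real^'n"
    and u :: "'n \<Rightarrow> real^'n"
  assumes pd: "pd_kernel k" and frk: "in_rkhs k f" and lam: "lam > 0"
    and ON: "\<And>i j. u i \<bullet> u j = (if i = j then 1 else 0)"
    and exp: "\<And>x. x = (\<Sum>j\<in>UNIV. (u j \<bullet> x) *\<^sub>R u j)"
    and eig: "\<And>j. gram k zs *v u j = \<kappa> j *\<^sub>R u j"
  shows "rkhs_norm k (krr_pred k lam zs (\<chi> i. f (zs i) + E$i))
    \<le> rkhs_norm k f + sqrt ((\<Sum>j\<in>UNIV. \<kappa> j / (\<kappa> j + lam\<^sup>2) * (u j \<bullet> E)\<^sup>2) / lam\<^sup>2)"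
proof -
  define K where "K = gram k zs"
  define G where "G = K + lam\<^sup>2 *\<^sub>R mat 1"
  define A where "A = matrix_inv G"
  have symK: "\<forall>i j. K$i$j = K$j$i" unfolding K_def by (rule gram_sym[OF pd])
  have GA: "G *v (A *v v) = v" for v
    using G_inv[OF pd lam, of zs] by (simp add: G_def A_def K_def matrix_vector_mul_assoc)
  have Gv: "G *v x = K *v x + lam\<^sup>2 *\<^sub>R x" for x
    by (simp add: G_def matrix_vector_mult_add_rdistrib scaleR_mat1_mult)
  have \<kappa>nn: "0 \<le> \<kappa> j" for j
    using gram_psd[OF pd, of "u j" zs] eig[of j] ON[of j j] by simp
  define F where "F = (\<chi> i. f (zs i))"
  define aF where "aF = A *v F"
  define aE where "aE = A *v E"
  define \<mu>F where "\<mu>F = (\<lambda>x. \<Sum>i\<in>UNIV. k x (zs i) * aF$i)"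
  define \<mu>E where "\<mu>E = (\<lambda>x. \<Sum>i\<in>UNIV. k x (zs i) * aE$i)"
  define pF where "pF = aF \<bullet> (K *v aF)"
  define pE where "pE = aE \<bullet> (K *v aE)"
  define W where "W = (\<Sum>j\<in>UNIV. \<kappa> j / (\<kappa> j + lam\<^sup>2) * (u j \<bullet> E)\<^sup>2) / lam\<^sup>2"
  have mu: "krr_pred k lam zs (\<chi> i. f (zs i) + E$i) = (\<lambda>x. \<mu>F x + \<mu>E x)"
  proof -
    have "(\<chi> i. f (zs i) + E$i) = F + E" by (simp add: F_def vec_eq_iff)
    hence "matrix_inv (gram k zs + lam\<^sup>2 *\<^sub>R mat 1) *v (\<chi> i. f (zs i) + E$i) = aF + aE"
      by (simp add: aF_def aE_def A_def G_def K_def matrix_vector_right_distrib)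
    thus ?thesis unfolding krr_pred_def \<mu>F_def \<mu>E_def
      by (simp add: sum.distrib[symmetric] distrib_left)
  qed
  have bF: "rkhs_bound k \<mu>F pF" unfolding \<mu>F_def pF_def K_def by (rule rkhs_bound_comb[OF pd])
  have bE: "rkhs_bound k \<mu>E pE" unfolding \<mu>E_def pE_def K_def by (rule rkhs_bound_comb[OF pd])
  have pFnn: "0 \<le> pF" unfolding pF_def K_def by (rule gram_psd[OF pd])
  have pEnn: "0 \<le> pE" unfolding pE_def K_def by (rule gram_psd[OF pd])
  define N where "N = (rkhs_norm k f)\<^sup>2"
  have bf: "rkhs_bound k f N" and nfnn: "0 \<le> rkhs_norm k f"
    using rkhs_bound_norm[OF pd frk] by (auto simp: N_def)
  have Nnn: "0 \<le> N" by (simp add: N_def)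
  have pF_le: "pF \<le> N"
  proof -
    define s where "s = aF \<bullet> F"
    have "F = G *v aF" by (simp add: aF_def GA)
    hence "s = pF + lam\<^sup>2 * (aF \<bullet> aF)" by (simp add: s_def Gv inner_add_right pF_def)
    hence s_ge: "pF \<le> s" by (simp add: s_def)
    have "(\<Sum>i\<in>UNIV. aF$i * f (zs i))\<^sup>2 \<le> N * (aF \<bullet> (gram k zs *v aF))"
      by (rule rkhs_bound_fin[OF bf])
    moreover have "(\<Sum>i\<in>UNIV. aF$i * f (zs i)) = s" by (simp add: s_def inner_vec_def F_def)
    ultimately have s2: "s\<^sup>2 \<le> N * pF" by (simp add: pF_def K_def)
    show ?thesis
    proof (cases "s > 0")
      case True
      have "s * s \<le> N * s" using s2 s_ge pFnn Nnn
        by (smt (verit, best) mult_left_mono power2_eq_square)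
      hence "s \<le> N" using True by simp
      thus ?thesis using s_ge by simp
    next
      case False
      thus ?thesis using s_ge Nnn by simp
    qed
  qed
  have pE_le: "pE \<le> W"
  proof -
    define b where "b j = u j \<bullet> aE" for j
    have pE_eq: "pE = (\<Sum>j\<in>UNIV. \<kappa> j * (b j)\<^sup>2)"
      unfolding pE_def b_def using on_quad[OF symK ON exp, of \<kappa> aE aE] eig
      by (simp add: K_def power2_eq_square mult_ac)
    have y: "u j \<bullet> E = (\<kappa> j + lam\<^sup>2) * b j" for j
    proof -
      have "E = G *v aE" by (simp add: aE_def GA)
      hence "u j \<bullet> E = u j \<bullet> (K *v aE) + lam\<^sup>2 * (u j \<bullet> aE)" by (simp add: Gv inner_add_right)
      also have "u j \<bullet> (K *v aE) = (K *v u j) \<bullet> aE" using sym_dot[OF symK, of "u j" aE] by simp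
      also have "\<dots> = \<kappa> j * (u j \<bullet> aE)" using eig[of j] by (simp add: K_def)
      finally show ?thesis by (simp add: b_def algebra_simps)
    qed
    have "W = (\<Sum>j\<in>UNIV. \<kappa> j * (\<kappa> j + lam\<^sup>2) / lam\<^sup>2 * (b j)\<^sup>2)"
    proof -
      have "\<kappa> j / (\<kappa> j + lam\<^sup>2) * (u j \<bullet> E)\<^sup>2 / lam\<^sup>2 = \<kappa> j * (\<kappa> j + lam\<^sup>2) / lam\<^sup>2 * (b j)\<^sup>2" for j
      proof -
        have "\<kappa> j + lam\<^sup>2 > 0" using \<kappa>nn[of j] lam by (simp add: add_nonneg_pos)
        thus ?thesis unfolding y by (rule aux_frac)
      qed
      thus ?thesis unfolding W_def sum_divide_distrib by simp
    qed
    moreover have "\<kappa> j * (b j)\<^sup>2 \<le> \<kappa> j * (\<kappa> j + lam\<^sup>2) / lam\<^sup>2 * (b j)\<^sup>2" for j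
    proof -
      have "1 \<le> (\<kappa> j + lam\<^sup>2) / lam\<^sup>2" using \<kappa>nn[of j] lam by simp
      hence "\<kappa> j * (b j)\<^sup>2 * 1 \<le> \<kappa> j * (b j)\<^sup>2 * ((\<kappa> j + lam\<^sup>2) / lam\<^sup>2)"
        using \<kappa>nn[of j] by (intro mult_left_mono) auto
      thus ?thesis by (simp add: mult_ac)
    qed
    ultimately show ?thesis unfolding pE_eq by (simp add: sum_mono)
  qed
  have "rkhs_bound k (\<lambda>x. \<mu>F x + \<mu>E x) ((sqrt pF + sqrt pE)\<^sup>2)"
    by (rule rkhs_bound_add[OF pd bF bE pFnn pEnn])
  hence "rkhs_norm k (\<lambda>x. \<mu>F x + \<mu>E x) \<le> sqrt ((sqrt pF + sqrt pE)\<^sup>2)"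
    by (rule rkhs_norm_le) simp
  also have "\<dots> = sqrt pF + sqrt pE" using pFnn pEnn by simp
  also have "\<dots> \<le> sqrt N + sqrt W" using pF_le pE_le by (intro add_mono real_sqrt_le_mono)
  also have "sqrt N = rkhs_norm k f" using nfnn by (simp add: N_def)
  finally show ?thesis unfolding mu W_def .
qed



abbreviation N1 :: "real measure" where
  "N1 \<equiv> density lborel (\<lambda>x. ennreal (std_normal_density x))"

lemma nd_one: "0 < s \<Longrightarrow> (\<integral>\<^sup>+ x. ennreal (normal_density m s x) \<partial>lborel) = 1"
  by (subst nn_integral_eq_integral) (auto intro: integrable_normal_density)

lemma exp_mult_eq: "(x::real) + y = z \<Longrightarrow> exp x * exp y = exp z"
  by (metis exp_add)

lemma gauss_mgf: "(\<integral>\<^sup>+ g. ennreal (exp (a * g)) \<partial>N1) = ennreal (exp (a\<^sup>2 / 2))"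
proof -
  have eq: "std_normal_density g * exp (a * g) = exp (a\<^sup>2 / 2) * normal_density a 1 g" for g
  proof -
    have e1: "exp (- g\<^sup>2 / 2) * exp (a * g) = exp (a * g - g\<^sup>2 / 2)"
      by (rule exp_mult_eq) simp
    have e2: "exp (a\<^sup>2 / 2) * exp (- (g - a)\<^sup>2 / 2) = exp (a * g - g\<^sup>2 / 2)"
      by (rule exp_mult_eq) (simp add: power2_eq_square field_simps)
    have "std_normal_density g * exp (a * g) = 1 / sqrt (2 * pi) * (exp (- g\<^sup>2 / 2) * exp (a * g))"
      by (simp add: std_normal_density_def)
    also have "\<dots> = 1 / sqrt (2 * pi) * (exp (a\<^sup>2 / 2) * exp (- (g - a)\<^sup>2 / 2))"
      unfolding e1 e2 ..
    also have "\<dots> = exp (a\<^sup>2 / 2) * normal_density a 1 g"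
      by (simp add: normal_density_def)
    finally show ?thesis .
  qed
  have "(\<integral>\<^sup>+ g. ennreal (exp (a * g)) \<partial>N1) = (\<integral>\<^sup>+ g. ennreal (std_normal_density g) * ennreal (exp (a * g)) \<partial>lborel)"
    by (rule nn_integral_density) auto
  also have "\<dots> = (\<integral>\<^sup>+ g. ennreal (exp (a\<^sup>2 / 2)) * ennreal (normal_density a 1 g) \<partial>lborel)"
    by (intro nn_integral_cong) (simp add: ennreal_mult'[symmetric] eq)
  also have "\<dots> = ennreal (exp (a\<^sup>2 / 2)) * (\<integral>\<^sup>+ g. ennreal (normal_density a 1 g) \<partial>lborel)"
    by (rule nn_integral_cmult) simp
  also have "\<dots> = ennreal (exp (a\<^sup>2 / 2))" by (simp add: nd_one)
  finally show ?thesis .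
qed

lemma gauss_sq:
  assumes q: "0 \<le> q" "q < 1"
  shows "(\<integral>\<^sup>+ g. ennreal (exp (q * g\<^sup>2 / 2)) \<partial>N1) = ennreal (1 / sqrt (1 - q))"
proof -
  define s where "s = 1 / sqrt (1 - q)"
  have s: "s > 0" using q by (simp add: s_def)
  have s2: "s\<^sup>2 = 1 / (1 - q)" using q by (simp add: s_def power_divide)
  have eq: "std_normal_density g * exp (q * g\<^sup>2 / 2) = s * normal_density 0 s g" for g
  proof -
    have "std_normal_density g * exp (q * g\<^sup>2 / 2) = 1 / sqrt (2 * pi) * exp (- (1 - q) * g\<^sup>2 / 2)"
      by (simp add: std_normal_density_def mult.assoc exp_add[symmetric] field_simps)
    moreover have "s * normal_density 0 s g = 1 / sqrt (2 * pi) * exp (- (1 - q) * g\<^sup>2 / 2)"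
    proof -
      have "sqrt (2 * pi * s\<^sup>2) = sqrt (2 * pi) * s" using s by (simp add: real_sqrt_mult)
      moreover have "- g\<^sup>2 / (2 * s\<^sup>2) = - (1 - q) * g\<^sup>2 / 2" using q by (simp add: s2 field_simps)
      ultimately show ?thesis using s by (simp add: normal_density_def)
    qed
    ultimately show ?thesis by simp
  qed
  have "(\<integral>\<^sup>+ g. ennreal (exp (q * g\<^sup>2 / 2)) \<partial>N1) = (\<integral>\<^sup>+ g. ennreal (std_normal_density g) * ennreal (exp (q * g\<^sup>2 / 2)) \<partial>lborel)"
    by (rule nn_integral_density) auto
  also have "\<dots> = (\<integral>\<^sup>+ g. ennreal s * ennreal (normal_density 0 s g) \<partial>lborel)"
    using s by (intro nn_integral_cong) (simp add: ennreal_mult'[symmetric] eq)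
  also have "\<dots> = ennreal s * (\<integral>\<^sup>+ g. ennreal (normal_density 0 s g) \<partial>lborel)"
    by (rule nn_integral_cmult) simp
  also have "\<dots> = ennreal s" using s by (simp add: nd_one)
  finally show ?thesis by (simp add: s_def)
qed



lemma pN1: "prob_space N1"
  using prob_space_normal_density[where \<mu>=0 and \<sigma>=1] by simp

lemma (in prob_space) sg_nn:
  assumes "subgaussian \<sigma> X"
  shows "(\<integral>\<^sup>+\<omega>. ennreal (exp (s * X \<omega>)) \<partial>M) \<le> ennreal (exp (s\<^sup>2 * \<sigma>\<^sup>2 / 2))"
proof -
  have int: "integrable M (\<lambda>\<omega>. exp (s * X \<omega>))" and le: "expectation (\<lambda>\<omega>. exp (s * X \<omega>)) \<le> exp (s\<^sup>2 * \<sigma>\<^sup>2 / 2)"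
    using assms by (auto simp: subgaussian_def)
  have "(\<integral>\<^sup>+\<omega>. ennreal (exp (s * X \<omega>)) \<partial>M) = ennreal (expectation (\<lambda>\<omega>. exp (s * X \<omega>)))"
    by (rule nn_integral_eq_integral[OF int]) simp
  also have "\<dots> \<le> ennreal (exp (s\<^sup>2 * \<sigma>\<^sup>2 / 2))" using le by (rule ennreal_leI)
  finally show ?thesis .
qed

lemma (in prob_space) mixture_bound:
  fixes \<epsilon> :: "'n::finite \<Rightarrow> 'a \<Rightarrow> real" and u :: "'n \<Rightarrow> real^'n" and q :: "'n \<Rightarrow> real"
  assumes ind: "indep_vars (\<lambda>_. borel) \<epsilon> UNIV"
    and sg: "\<And>i. subgaussian \<sigma> (\<epsilon> i)" and \<sigma>: "\<sigma> > 0"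
    and ON: "\<And>i j. u i \<bullet> u j = (if i = j then 1 else 0)"
    and q0: "\<And>j. 0 \<le> q j" and q1: "\<And>j. q j < 1"
  shows "(\<integral>\<^sup>+\<omega>. ennreal (exp ((\<Sum>j\<in>UNIV. q j * (u j \<bullet> (\<chi> i. \<epsilon> i \<omega>))\<^sup>2) / (2 * \<sigma>\<^sup>2))) \<partial>M)
     \<le> ennreal (\<Prod>j\<in>UNIV. 1 / sqrt (1 - q j))"
proof -
  have rv[measurable]: "\<epsilon> i \<in> borel_measurable M" for i
    using sg[of i] by (simp add: subgaussian_def)
  interpret PS: product_prob_space "\<lambda>_::'n. N1" "UNIV::'n set"
    by (intro product_prob_space.intro product_sigma_finite.intro product_prob_space_axioms.intro)
       (auto simp: pN1 prob_space_imp_sigma_finite)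
  define PN where "PN = PiM (UNIV::'n set) (\<lambda>_. N1)"
  interpret PP: pair_sigma_finite M PN
    unfolding PN_def
    by (intro pair_sigma_finite.intro prob_space_imp_sigma_finite PS.P.prob_space_axioms prob_space_axioms)
  define w where "w g i = (\<Sum>j\<in>UNIV. g j * sqrt (q j) * u j $ i)" for g :: "'n \<Rightarrow> real" and i
  define H where "H \<omega> g = ennreal (exp (\<Sum>i\<in>UNIV. w g i * \<epsilon> i \<omega> / \<sigma>))" for \<omega> g
  have Hmeas: "case_prod H \<in> borel_measurable (M \<Otimes>\<^sub>M PN)"
    unfolding H_def w_def PN_def by measurable
  have dec: "ennreal (exp ((\<Sum>j\<in>UNIV. q j * (u j \<bullet> (\<chi> i. \<epsilon> i \<omega>))\<^sup>2) / (2 * \<sigma>\<^sup>2))) = (\<integral>\<^sup>+g. H \<omega> g \<partial>PN)" for \<omega>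
  proof -
    define a where "a j = sqrt (q j) * (u j \<bullet> (\<chi> i. \<epsilon> i \<omega>)) / \<sigma>" for j
    have "(\<Sum>j\<in>UNIV. q j * (u j \<bullet> (\<chi> i. \<epsilon> i \<omega>))\<^sup>2) / (2 * \<sigma>\<^sup>2) = (\<Sum>j\<in>UNIV. (a j)\<^sup>2 / 2)"
      unfolding sum_divide_distrib
      by (intro sum.cong refl) (use \<sigma> q0 in \<open>simp add: a_def power_divide power_mult_distrib field_simps\<close>)
    hence "ennreal (exp ((\<Sum>j\<in>UNIV. q j * (u j \<bullet> (\<chi> i. \<epsilon> i \<omega>))\<^sup>2) / (2 * \<sigma>\<^sup>2)))
        = (\<Prod>j\<in>UNIV. ennreal (exp ((a j)\<^sup>2 / 2)))"
      by (simp add: exp_sum prod_ennreal)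
    also have "\<dots> = (\<Prod>j\<in>UNIV. \<integral>\<^sup>+ x. ennreal (exp (a j * x)) \<partial>N1)"
      by (simp add: gauss_mgf)
    also have "\<dots> = (\<integral>\<^sup>+g. (\<Prod>j\<in>UNIV. ennreal (exp (a j * g j))) \<partial>PN)"
      unfolding PN_def by (rule PS.product_nn_integral_prod[symmetric]) auto
    also have "\<dots> = (\<integral>\<^sup>+g. H \<omega> g \<partial>PN)"
    proof (intro nn_integral_cong)
      fix g
      have "(\<Sum>j\<in>UNIV. a j * g j) = (\<Sum>i\<in>UNIV. w g i * \<epsilon> i \<omega> / \<sigma>)"
        by (simp add: a_def w_def inner_vec_def sum_distrib_left sum_distrib_right sum_divide_distrib mult_ac)
           (rule sum.swap)
      thus "(\<Prod>j\<in>UNIV. ennreal (exp (a j * g j))) = H \<omega> g"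
        by (simp add: H_def prod_ennreal exp_sum[symmetric])
    qed
    finally show ?thesis .
  qed
  have inner: "(\<integral>\<^sup>+\<omega>. H \<omega> g \<partial>M) \<le> ennreal (exp (\<Sum>j\<in>UNIV. q j * (g j)\<^sup>2 / 2))" for g
  proof -
    have ind2: "indep_vars (\<lambda>_. borel) (\<lambda>i \<omega>. ennreal (exp (w g i / \<sigma> * \<epsilon> i \<omega>))) UNIV"
      by (rule indep_vars_compose2[OF ind]) simp
    have "(\<integral>\<^sup>+\<omega>. H \<omega> g \<partial>M) = (\<integral>\<^sup>+\<omega>. (\<Prod>i\<in>UNIV. ennreal (exp (w g i / \<sigma> * \<epsilon> i \<omega>))) \<partial>M)"
      by (intro nn_integral_cong) (simp add: H_def exp_sum[symmetric] prod_ennreal mult_ac)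
    also have "\<dots> = (\<Prod>i\<in>UNIV. \<integral>\<^sup>+\<omega>. ennreal (exp (w g i / \<sigma> * \<epsilon> i \<omega>)) \<partial>M)"
      using indep_vars_nn_integral[of UNIV "\<lambda>i \<omega>. ennreal (exp (w g i / \<sigma> * \<epsilon> i \<omega>))"] ind2 by simp
    also have "\<dots> \<le> (\<Prod>i\<in>UNIV. ennreal (exp ((w g i / \<sigma>)\<^sup>2 * \<sigma>\<^sup>2 / 2)))"
      by (intro prod_mono_ennreal sg_nn[OF sg])
    also have "\<dots> = ennreal (exp (\<Sum>i\<in>UNIV. (w g i)\<^sup>2 / 2))"
      using \<sigma> by (simp add: prod_ennreal exp_sum power_divide)
    also have "(\<Sum>i\<in>UNIV. (w g i)\<^sup>2 / 2) = (\<Sum>j\<in>UNIV. q j * (g j)\<^sup>2 / 2)"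
    proof -
      have "(\<Sum>i\<in>UNIV. (w g i)\<^sup>2) = (\<Sum>j\<in>UNIV. (g j * sqrt (q j)) *\<^sub>R u j) \<bullet> (\<Sum>j\<in>UNIV. (g j * sqrt (q j)) *\<^sub>R u j)"
        by (simp add: w_def inner_vec_def power2_eq_square sum_component)
      also have "\<dots> = (\<Sum>j\<in>UNIV. (g j * sqrt (q j)) * (g j * sqrt (q j)))" by (rule on_sum_inner[OF ON])
      also have "\<dots> = (\<Sum>j\<in>UNIV. q j * (g j)\<^sup>2)" using q0
        by (intro sum.cong) (auto simp: power2_eq_square mult_ac)
      finally show ?thesis by (simp add: sum_divide_distrib[symmetric])
    qed
    finally show ?thesis .
  qed
  have outer: "(\<integral>\<^sup>+g. ennreal (exp (\<Sum>j\<in>UNIV. q j * (g j)\<^sup>2 / 2)) \<partial>PN) = ennreal (\<Prod>j\<in>UNIV. 1 / sqrt (1 - q j))"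
  proof -
    have "(\<integral>\<^sup>+g. ennreal (exp (\<Sum>j\<in>UNIV. q j * (g j)\<^sup>2 / 2)) \<partial>PN)
        = (\<integral>\<^sup>+g. (\<Prod>j\<in>UNIV. ennreal (exp (q j * (g j)\<^sup>2 / 2))) \<partial>PN)"
      by (simp add: exp_sum prod_ennreal)
    also have "\<dots> = (\<Prod>j\<in>UNIV. \<integral>\<^sup>+ x. ennreal (exp (q j * x\<^sup>2 / 2)) \<partial>N1)"
      unfolding PN_def by (rule PS.product_nn_integral_prod) auto
    also have "\<dots> = (\<Prod>j\<in>UNIV. ennreal (1 / sqrt (1 - q j)))"
      using q0 q1 by (simp add: gauss_sq)
    also have "\<dots> = ennreal (\<Prod>j\<in>UNIV. 1 / sqrt (1 - q j))"
      by (rule prod_ennreal) (use q1 in \<open>simp add: less_imp_le\<close>)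
    finally show ?thesis .
  qed
  have "(\<integral>\<^sup>+\<omega>. ennreal (exp ((\<Sum>j\<in>UNIV. q j * (u j \<bullet> (\<chi> i. \<epsilon> i \<omega>))\<^sup>2) / (2 * \<sigma>\<^sup>2))) \<partial>M)
      = (\<integral>\<^sup>+\<omega>. (\<integral>\<^sup>+g. H \<omega> g \<partial>PN) \<partial>M)"
    by (simp add: dec)
  also have "\<dots> = (\<integral>\<^sup>+g. (\<integral>\<^sup>+\<omega>. H \<omega> g \<partial>M) \<partial>PN)"
    by (rule PP.Fubini'[OF Hmeas, symmetric])
  also have "\<dots> \<le> (\<integral>\<^sup>+g. ennreal (exp (\<Sum>j\<in>UNIV. q j * (g j)\<^sup>2 / 2)) \<partial>PN)"
    by (intro nn_integral_mono inner)
  also have "\<dots> = ennreal (\<Prod>j\<in>UNIV. 1 / sqrt (1 - q j))" by (rule outer)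
  finally show ?thesis .
qed



lemma exp_strict:
  fixes x :: real assumes "x \<noteq> 0" shows "1 + x < exp x"
proof (cases "1 + x / 2 < 0")
  case True
  hence "1 + x < 0" by simp
  thus ?thesis using exp_gt_zero[of x] by linarith
next
  case False
  have "1 + x / 2 \<le> exp (x / 2)" by (rule exp_ge_add_one_self)
  hence "(1 + x / 2) * (1 + x / 2) \<le> exp (x / 2) * exp (x / 2)"
    using False by (intro mult_mono) auto
  also have "exp (x / 2) * exp (x / 2) = exp x" by (simp add: exp_add[symmetric])
  finally have "1 + x + x\<^sup>2 / 4 \<le> exp x" by (simp add: algebra_simps power2_eq_square)
  moreover have "x\<^sup>2 / 4 > 0" using assms by simp
  ultimately show ?thesis by linarith
qed

lemma (in prob_space) sg0_zero:
  assumes sg: "subgaussian 0 X"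
  shows "AE \<omega> in M. X \<omega> = 0"
proof -
  have [measurable]: "X \<in> borel_measurable M" and intX: "integrable M X" and EX: "expectation X = 0"
    and ie: "integrable M (\<lambda>\<omega>. exp (1 * X \<omega>))" and le: "expectation (\<lambda>\<omega>. exp (1 * X \<omega>)) \<le> exp (1\<^sup>2 * 0\<^sup>2 / 2)"
    using sg unfolding subgaussian_def by blast+
  define f where "f \<omega> = exp (X \<omega>) - 1 - X \<omega>" for \<omega>
  have intf: "integrable M f" unfolding f_def using ie intX by (intro Bochner_Integration.integrable_diff) auto
  have fnn: "AE \<omega> in M. 0 \<le> f \<omega>" unfolding f_def using exp_ge_add_one_self by (auto simp: algebra_simps)
  have "expectation f = expectation (\<lambda>\<omega>. exp (X \<omega>)) - 1 - expectation X"
    unfolding f_def using ie intX by (simp add: Bochner_Integration.integral_diff prob_space)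
  hence "expectation f \<le> 0" using le EX by simp
  moreover have "expectation f \<ge> 0" using fnn by (rule integral_nonneg_AE)
  ultimately have "expectation f = 0" by simp
  hence "AE \<omega> in M. f \<omega> = 0" using integral_nonneg_eq_0_iff_AE[OF intf fnn] by simp
  thus ?thesis
  proof (rule AE_mp, intro AE_I2 impI)
    fix \<omega> assume "f \<omega> = 0"
    thus "X \<omega> = 0" using exp_strict[of "X \<omega>"] by (auto simp: f_def)
  qed
qed

lemma eig_nonneg:
  assumes pd: "pd_kernel k" and ON: "\<And>i j. u i \<bullet> u j = (if i = j then 1 else 0)"
    and eig: "\<And>j. gram k zs *v u j = \<kappa> j *\<^sub>R u j"
  shows "0 \<le> \<kappa> j"
  using gram_psd[OF pd, of "u j" zs] eig[of j] ON[of j j] by simp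

lemma eig_le:
  fixes zs :: "'n::finite \<Rightarrow> 'z" and u :: "'n \<Rightarrow> real^'n" and \<kappa> :: "'n \<Rightarrow> real"
  assumes pd: "pd_kernel k" and diag: "\<And>z. k z z \<le> 1" and ON: "\<And>i j. u i \<bullet> u j = (if i = j then 1 else 0)"
    and eig: "\<And>j. gram k zs *v u j = \<kappa> j *\<^sub>R u j"
  shows "\<kappa> j \<le> real (CARD('n)) ^ 2"
proof -
  have "\<kappa> j = u j \<bullet> (gram k zs *v u j)" using eig[of j] ON[of j j] by simp
  also have "\<dots> = (\<Sum>i\<in>UNIV. \<Sum>i'\<in>UNIV. u j $ i * u j $ i' * k (zs i) (zs i'))" by (rule gram_quad)
  also have "\<dots> \<le> (\<Sum>i\<in>(UNIV::'n set). \<Sum>i'\<in>(UNIV::'n set). 1)"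
  proof (intro sum_mono)
    fix i i'
    have n1: "norm (u j) = 1" using ON[of j j] by (simp add: norm_eq_sqrt_inner)
    have "\<bar>u j $ i\<bar> \<le> 1" "\<bar>u j $ i'\<bar> \<le> 1" "\<bar>k (zs i) (zs i')\<bar> \<le> 1"
      using component_le_norm_cart[of "u j"] n1 kernel_bound[OF pd diag] by auto
    hence "\<bar>u j $ i * u j $ i' * k (zs i) (zs i')\<bar> \<le> 1 * 1 * 1"
      unfolding abs_mult by (intro mult_mono) auto
    thus "u j $ i * u j $ i' * k (zs i) (zs i') \<le> 1" by simp
  qed
  also have "\<dots> = real (CARD('n)) ^ 2" by (simp add: power2_eq_square)
  finally show ?thesis .
qed

lemma logdet_formula:
  fixes zs :: "'n::finite \<Rightarrow> 'z" and u :: "'n \<Rightarrow> real^'n" and \<kappa> :: "'n \<Rightarrow> real"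
  assumes ON: "\<And>i j. u i \<bullet> u j = (if i = j then 1 else 0)"
    and eig: "\<And>j. gram k zs *v u j = \<kappa> j *\<^sub>R u j"
  shows "det (mat 1 + c *\<^sub>R gram k zs) = (\<Prod>j\<in>UNIV. 1 + c * \<kappa> j)"
proof (rule det_eig[OF ON])
  fix j
  show "(mat 1 + c *\<^sub>R gram k zs) *v u j = (1 + c * \<kappa> j) *\<^sub>R u j"
    by (simp add: matrix_vector_mult_add_rdistrib scaleR_matrix_vector_assoc[symmetric] eig scaleR_add_left)
qed

lemma logdet_le:
  fixes zs :: "'n::finite \<Rightarrow> 'z"
  assumes pd: "pd_kernel k" and diag: "\<And>z. k z z \<le> 1" and lam: "lam > 0"
  shows "ln (det (mat 1 + (1 / lam\<^sup>2) *\<^sub>R gram k zs)) / 2 \<le> real (CARD('n)) ^ 3 / lam\<^sup>2"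
proof -
  obtain u :: "'n \<Rightarrow> real^'n" and \<kappa> where EB: "eigbasis (gram k zs) u \<kappa>"
    using spectral_ex[OF gram_sym[OF pd, of zs]] by blast
  note ON = eigbasis_ON[OF EB] and eig = eigbasis_eig[OF EB]
  have knn: "0 \<le> \<kappa> j" for j by (rule eig_nonneg[OF pd ON eig])
  have kle: "\<kappa> j \<le> real (CARD('n)) ^ 2" for j by (rule eig_le[OF pd diag ON eig])
  have pos: "0 < 1 + 1 / lam\<^sup>2 * \<kappa> j" for j using knn[of j] lam by (simp add: add_pos_nonneg)
  have nz: "1 + 1 / lam\<^sup>2 * \<kappa> j \<noteq> 0" for j using pos[of j] by linarith
  have "ln (det (mat 1 + (1 / lam\<^sup>2) *\<^sub>R gram k zs)) = (\<Sum>j\<in>UNIV. ln (1 + 1 / lam\<^sup>2 * \<kappa> j))"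
    unfolding logdet_formula[OF ON eig] by (rule ln_prod, simp, rule nz)
  also have "\<dots> \<le> (\<Sum>j\<in>(UNIV::'n set). real (CARD('n)) ^ 2 / lam\<^sup>2)"
  proof (intro sum_mono)
    fix j
    have "ln (1 + 1 / lam\<^sup>2 * \<kappa> j) \<le> 1 / lam\<^sup>2 * \<kappa> j" using knn[of j] lam
      by (intro ln_add_one_self_le_self) simp
    also have "\<dots> \<le> real (CARD('n)) ^ 2 / lam\<^sup>2" using kle[of j] lam by (simp add: divide_right_mono)
    finally show "ln (1 + 1 / lam\<^sup>2 * \<kappa> j) \<le> real (CARD('n)) ^ 2 / lam\<^sup>2" .
  qed
  also have "\<dots> = real (CARD('n)) ^ 3 / lam\<^sup>2" by (simp add: power2_eq_square power3_eq_cube)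
  finally have "ln (det (mat 1 + (1 / lam\<^sup>2) *\<^sub>R gram k zs)) \<le> real (CARD('n)) ^ 3 / lam\<^sup>2" .
  moreover have "0 \<le> ln (det (mat 1 + (1 / lam\<^sup>2) *\<^sub>R gram k zs))"
    unfolding logdet_formula[OF ON eig] using knn lam
    by (intro ln_ge_zero prod_ge_1) simp
  ultimately show ?thesis by linarith
qed

lemma Gamma_ge:
  fixes zs :: "'n::finite \<Rightarrow> 'z"
  assumes pd: "pd_kernel k" and diag: "\<And>z. k z z \<le> 1" and lam: "lam > 0"
  shows "ln (det (mat 1 + (1 / lam\<^sup>2) *\<^sub>R gram k zs)) / 2 \<le> max_info_gain k lam TYPE('n)"
proof -
  have bdd: "bdd_above ((\<lambda>zs'::'n \<Rightarrow> 'z. ln (det (mat 1 + (1 / lam\<^sup>2) *\<^sub>R gram k zs')) / 2) ` UNIV)"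
    by (rule bdd_aboveI2[where M = "real (CARD('n)) ^ 3 / lam\<^sup>2"]) (rule logdet_le[OF pd diag lam])
  show ?thesis unfolding max_info_gain_def by (rule cSUP_upper[OF UNIV_I bdd])
qed



theorem lemma5:
  fixes M :: "'a measure" and k :: "'z \<Rightarrow> 'z \<Rightarrow> real" and f :: "'z \<Rightarrow> real"
    and zs :: "'n::finite \<Rightarrow> 'z" and \<epsilon> :: "'n \<Rightarrow> 'a \<Rightarrow> real"
    and lam \<sigma> \<delta> :: real
  assumes "prob_space M"
    and "pd_kernel k" and "\<And>z. k z z \<le> 1"
    and "in_rkhs k f"
    and "lam > 0" and "\<sigma> \<ge> 0" and "\<delta> > 0"
    and "prob_space.indep_vars M (\<lambda>_. borel) \<epsilon> UNIV"
    and "\<And>i. prob_space.subgaussian M \<sigma> (\<epsilon> i)"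
  shows "\<exists>A \<in> sets M. prob_space.prob M A \<ge> 1 - \<delta> \<and>
           (\<forall>\<omega>\<in>A. rkhs_norm k (krr_pred k lam zs (\<chi> i. f (zs i) + \<epsilon> i \<omega>))
              \<le> rkhs_norm k f + \<sigma> / lam *
                   sqrt (2 * (max_info_gain k lam TYPE('n) + 1 + ln (1 / \<delta>))))"
proof -
  interpret P: prob_space M by (rule assms(1))
  note pd = assms(2) and diag = assms(3) and frk = assms(4) and lam = assms(5)
    and \<sigma>0 = assms(6) and \<delta>0 = assms(7) and ind = assms(8) and sg = assms(9)
  define \<Gamma> where "\<Gamma> = max_info_gain k lam TYPE('n)"
  have rv[measurable]: "\<epsilon> i \<in> borel_measurable M" for i
    using sg[of i] by (simp add: P.subgaussian_def)
  show ?thesis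
  proof (cases "1 \<le> \<delta>")
    case True
    show ?thesis using True by (intro bexI[of _ "{}"]) auto
  next
    case False
    hence \<delta>1: "\<delta> < 1" by simp
    obtain u :: "'n \<Rightarrow> real^'n" and \<kappa> where EB: "eigbasis (gram k zs) u \<kappa>"
      using spectral_ex[OF gram_sym[OF pd, of zs]] by blast
    note ON = eigbasis_ON[OF EB] and eig = eigbasis_eig[OF EB] and exp = eigbasis_exp[OF EB]
    have knn: "0 \<le> \<kappa> j" for j by (rule eig_nonneg[OF pd ON eig])
    have kpos: "0 < \<kappa> j + lam\<^sup>2" for j using knn[of j] lam by (simp add: add_nonneg_pos)
    define q where "q j = \<kappa> j / (\<kappa> j + lam\<^sup>2)" for j
    have q0: "0 \<le> q j" for j using knn[of j] kpos[of j] by (simp add: q_def)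
    have q1: "q j < 1" for j using kpos[of j] lam by (simp add: q_def)
    define D where "D = det (mat 1 + (1 / lam\<^sup>2) *\<^sub>R gram k zs)"
    have Dprod: "D = (\<Prod>j\<in>UNIV. 1 + 1 / lam\<^sup>2 * \<kappa> j)" unfolding D_def by (rule logdet_formula[OF ON eig])
    have D1: "1 \<le> D" unfolding Dprod using knn lam by (intro prod_ge_1) simp
    define Lg where "Lg = ln D / 2"
    have Lg0: "0 \<le> Lg" using D1 by (simp add: Lg_def)
    have Lg\<Gamma>: "Lg \<le> \<Gamma>" unfolding Lg_def D_def \<Gamma>_def by (rule Gamma_ge[OF pd diag lam])
    have ld: "0 < ln (1 / \<delta>)" using \<delta>0 \<delta>1 by simp
    define Q where "Q \<omega> = (\<Sum>j\<in>UNIV. q j * (\<Sum>i\<in>UNIV. u j $ i * \<epsilon> i \<omega>)\<^sup>2)" for \<omega>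
    have Qnn: "0 \<le> Q \<omega>" for \<omega> unfolding Q_def using q0 by (intro sum_nonneg) simp
    have Qform: "(\<Sum>j\<in>UNIV. \<kappa> j / (\<kappa> j + lam\<^sup>2) * (u j \<bullet> (\<chi> i. \<epsilon> i \<omega>))\<^sup>2) = Q \<omega>" for \<omega>
      by (simp add: Q_def q_def inner_vec_def)
    have detb: "rkhs_norm k (krr_pred k lam zs (\<chi> i. f (zs i) + \<epsilon> i \<omega>)) \<le> rkhs_norm k f + sqrt (Q \<omega> / lam\<^sup>2)" for \<omega>
    proof -
      have e: "(\<chi> i. f (zs i) + (\<chi> i. \<epsilon> i \<omega>)$i) = (\<chi> i. f (zs i) + \<epsilon> i \<omega>)" by simp
      show ?thesis using det_bound[OF pd frk lam ON exp eig, of "\<chi> i. \<epsilon> i \<omega>"] unfolding Qform e .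
    qed
    have suff: "\<exists>A \<in> sets M. P.prob A \<ge> 1 - \<delta> \<and> (\<forall>\<omega>\<in>A. sqrt (Q \<omega> / lam\<^sup>2) \<le> \<sigma> / lam * sqrt (2 * (\<Gamma> + 1 + ln (1 / \<delta>))))"
    proof (cases "\<sigma> = 0")
      case True
      define A where "A = {\<omega> \<in> space M. \<forall>i. \<epsilon> i \<omega> = 0}"
      have Asets: "A \<in> sets M" unfolding A_def by measurable
      have "AE \<omega> in M. \<forall>i\<in>UNIV. \<epsilon> i \<omega> = 0"
        by (rule AE_finite_allI) (use sg True P.sg0_zero in auto)
      hence "P.prob A = 1" unfolding A_def using Asets[unfolded A_def]
        by (subst P.prob_Collect_eq_1) auto
      moreover have "\<forall>\<omega>\<in>A. sqrt (Q \<omega> / lam\<^sup>2) \<le> \<sigma> / lam * sqrt (2 * (\<Gamma> + 1 + ln (1 / \<delta>)))"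
        using True by (auto simp: A_def Q_def)
      ultimately show ?thesis using Asets \<delta>0 by (intro bexI[of _ A]) auto
    next
      case False
      hence \<sigma>p: "\<sigma> > 0" using \<sigma>0 by simp
      define \<tau> where "\<tau> = Lg + ln (1 / \<delta>)"
      define A where "A = {\<omega> \<in> space M. Q \<omega> / (2 * \<sigma>\<^sup>2) \<le> \<tau>}"
      define B where "B = {\<omega> \<in> space M. \<tau> < Q \<omega> / (2 * \<sigma>\<^sup>2)}"
      have Asets: "A \<in> sets M" unfolding A_def Q_def by measurable
      have Bsets: "B \<in> sets M" unfolding B_def Q_def by measurable
      have AB: "A = space M - B" by (auto simp: A_def B_def)
      have mix: "(\<integral>\<^sup>+\<omega>. ennreal (exp (Q \<omega> / (2 * \<sigma>\<^sup>2))) \<partial>M) \<le> ennreal (\<Prod>j\<in>UNIV. 1 / sqrt (1 - q j))"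
        using P.mixture_bound[OF ind sg \<sigma>p ON q0 q1] by (simp add: Q_def inner_vec_def)
      have prodeq: "(\<Prod>j\<in>UNIV. 1 / sqrt (1 - q j)) = exp Lg"
      proof -
        have "1 / sqrt (1 - q j) = sqrt (1 + 1 / lam\<^sup>2 * \<kappa> j)" for j
        proof -
          have "1 - q j = lam\<^sup>2 / (\<kappa> j + lam\<^sup>2)" using kpos[of j] by (simp add: q_def field_simps)
          hence "1 / (1 - q j) = (\<kappa> j + lam\<^sup>2) / lam\<^sup>2" by simp
          also have "\<dots> = 1 + 1 / lam\<^sup>2 * \<kappa> j" using lam by (simp add: field_simps)
          finally have "1 / (1 - q j) = 1 + 1 / lam\<^sup>2 * \<kappa> j" .
          thus ?thesis by (metis real_sqrt_divide real_sqrt_one)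
        qed
        hence "(\<Prod>j\<in>UNIV. 1 / sqrt (1 - q j)) = (\<Prod>j\<in>UNIV. sqrt (1 + 1 / lam\<^sup>2 * \<kappa> j))" by simp
        also have "\<dots> = sqrt D"
        proof -
          have "sqrt D = (\<Prod>j\<in>UNIV. sqrt (1 + 1 / lam\<^sup>2 * \<kappa> j))"
            unfolding Dprod
          proof (rule real_sqrt_unique)
            have fnn: "0 \<le> 1 + 1 / lam\<^sup>2 * \<kappa> j" for j using knn[of j] lam by simp
            show "(\<Prod>j\<in>UNIV. sqrt (1 + 1 / lam\<^sup>2 * \<kappa> j))\<^sup>2 = (\<Prod>j\<in>UNIV. 1 + 1 / lam\<^sup>2 * \<kappa> j)"
              unfolding prod_power_distrib using fnn by simp
            show "0 \<le> (\<Prod>j\<in>UNIV. sqrt (1 + 1 / lam\<^sup>2 * \<kappa> j))"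
              by (rule prod_nonneg) (use fnn in simp)
          qed
          thus ?thesis by simp
        qed
        also have "\<dots> = exp Lg"
        proof (rule real_sqrt_unique)
          have "(exp Lg)\<^sup>2 = exp (ln D)" by (simp add: Lg_def power2_eq_square exp_add[symmetric])
          thus "(exp Lg)\<^sup>2 = D" using D1 by simp
        qed simp
        finally show ?thesis .
      qed
      have "emeasure M B = (\<integral>\<^sup>+\<omega>. indicator B \<omega> \<partial>M)" using Bsets by simp
      also have "\<dots> \<le> (\<integral>\<^sup>+\<omega>. ennreal (exp (- \<tau>)) * ennreal (exp (Q \<omega> / (2 * \<sigma>\<^sup>2))) \<partial>M)"
      proof (rule nn_integral_mono)
        fix \<omega>
        show "indicator B \<omega> \<le> ennreal (exp (- \<tau>)) * ennreal (exp (Q \<omega> / (2 * \<sigma>\<^sup>2)))"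
        proof (cases "\<omega> \<in> B")
          case True
          hence "0 < Q \<omega> / (2 * \<sigma>\<^sup>2) - \<tau>" by (simp add: B_def)
          hence "1 \<le> exp (Q \<omega> / (2 * \<sigma>\<^sup>2) - \<tau>)" by simp
          also have "exp (Q \<omega> / (2 * \<sigma>\<^sup>2) - \<tau>) = exp (- \<tau>) * exp (Q \<omega> / (2 * \<sigma>\<^sup>2))"
            by (simp add: exp_add[symmetric])
          finally have "ennreal 1 \<le> ennreal (exp (- \<tau>) * exp (Q \<omega> / (2 * \<sigma>\<^sup>2)))" by (rule ennreal_leI)
          thus ?thesis using True by (simp add: ennreal_mult')
        qed simp
      qed
      also have "\<dots> = ennreal (exp (- \<tau>)) * (\<integral>\<^sup>+\<omega>. ennreal (exp (Q \<omega> / (2 * \<sigma>\<^sup>2))) \<partial>M)"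
        by (rule nn_integral_cmult) (unfold Q_def, measurable)
      also have "\<dots> \<le> ennreal (exp (- \<tau>)) * ennreal (exp Lg)"
        using mix unfolding prodeq by (rule mult_left_mono) simp
      also have "\<dots> = ennreal \<delta>"
      proof -
        have "exp (- \<tau>) * exp Lg = exp (ln \<delta>)" unfolding \<tau>_def using \<delta>0
          by (simp add: exp_add[symmetric] ln_div)
        thus ?thesis using \<delta>0 by (simp add: ennreal_mult'[symmetric])
      qed
      finally have "emeasure M B \<le> ennreal \<delta>" .
      hence PB: "P.prob B \<le> \<delta>" using \<delta>0 by (simp add: P.emeasure_eq_measure)
      have "P.prob A = 1 - P.prob B" unfolding AB by (rule P.prob_compl[OF Bsets])
      hence PA: "P.prob A \<ge> 1 - \<delta>" using PB by simp
      have "\<forall>\<omega>\<in>A. sqrt (Q \<omega> / lam\<^sup>2) \<le> \<sigma> / lam * sqrt (2 * (\<Gamma> + 1 + ln (1 / \<delta>)))"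
      proof
        fix \<omega> assume "\<omega> \<in> A"
        hence "Q \<omega> / (2 * \<sigma>\<^sup>2) \<le> \<tau>" by (simp add: A_def)
        hence "Q \<omega> \<le> 2 * \<sigma>\<^sup>2 * \<tau>" using \<sigma>p by (simp add: divide_le_eq mult_ac)
        also have "\<dots> \<le> 2 * \<sigma>\<^sup>2 * (\<Gamma> + 1 + ln (1 / \<delta>))" unfolding \<tau>_def using Lg\<Gamma> by (intro mult_left_mono) auto
        finally have "Q \<omega> / lam\<^sup>2 \<le> (2 * \<sigma>\<^sup>2 * (\<Gamma> + 1 + ln (1 / \<delta>))) / lam\<^sup>2"
          by (rule divide_right_mono) simp
        also have "\<dots> = (\<sigma> / lam)\<^sup>2 * (2 * (\<Gamma> + 1 + ln (1 / \<delta>)))"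
          using lam by (simp add: power_divide field_simps)
        finally have "Q \<omega> / lam\<^sup>2 \<le> (\<sigma> / lam)\<^sup>2 * (2 * (\<Gamma> + 1 + ln (1 / \<delta>)))" .
        hence "sqrt (Q \<omega> / lam\<^sup>2) \<le> sqrt ((\<sigma> / lam)\<^sup>2 * (2 * (\<Gamma> + 1 + ln (1 / \<delta>))))"
          by (rule real_sqrt_le_mono)
        also have "\<dots> = \<sigma> / lam * sqrt (2 * (\<Gamma> + 1 + ln (1 / \<delta>)))"
          using \<sigma>p lam by (simp add: real_sqrt_mult)
        finally show "sqrt (Q \<omega> / lam\<^sup>2) \<le> \<sigma> / lam * sqrt (2 * (\<Gamma> + 1 + ln (1 / \<delta>)))" .
      qed
      thus ?thesis using Asets PA by blast
    qed
    then obtain A where A: "A \<in> sets M" "P.prob A \<ge> 1 - \<delta>"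
      "\<forall>\<omega>\<in>A. sqrt (Q \<omega> / lam\<^sup>2) \<le> \<sigma> / lam * sqrt (2 * (\<Gamma> + 1 + ln (1 / \<delta>)))" by blast
    show ?thesis
    proof (intro bexI[OF _ A(1)] conjI ballI)
      show "1 - \<delta> \<le> P.prob A" by (rule A(2))
      fix \<omega> assume "\<omega> \<in> A"
      thus "rkhs_norm k (krr_pred k lam zs (\<chi> i. f (zs i) + \<epsilon> i \<omega>))
          \<le> rkhs_norm k f + \<sigma> / lam * sqrt (2 * (max_info_gain k lam TYPE('n) + 1 + ln (1 / \<delta>)))"
        using detb[of \<omega>] A(3) unfolding \<Gamma>_def by fastforce
    qed
  qed
qed


end
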